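(* Let $\mathbf a=(a_1,\dots,a_m)$ and $\mathbf e=(e_1,\dots,e_{m-1})$ be partitions such that $\mathbf a\prec'\mathbf e$ and $\sum_{i=1}^{m-1}e_i\le\sum_{i=1}^m a_i$. Let $\theta=\#\{i: e_i>0\}$ and $\bar\theta=\#\{i: a_i>0\}$. Then $\bar\theta\ge\theta$.
   Context: A partition is a nonincreasing finite sequence of nonnegative integers. 1-step generalized majorization: for nonincreasing integer sequences $\mathbf a=(a_1,\dots,a_m)$ and $\mathbf e=(e_1,\dots,e_{m-1})$, set $e_m=-\infty$ and $h=\min\{i: e_i<a_i\}$; then $\mathbf a\prec'\mathbf e$ means $e_i=a_{i+1}$ for all $h\le i\le m-1$. *)

theory Defs
  imports Main
begin

text \<open>A partition: a nonincreasing finite list of natural numbers.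
  Lists are 0-indexed: a ! i corresponds to a_{i+1} in the paper.\<close>
definition is_partition :: "nat list \<Rightarrow> bool" where
  "is_partition a \<longleftrightarrow> sorted_wrt (\<ge>) a"

text \<open>1-step generalized majorization a \<prec>' e, for a of length m and e of length m-1.
  With the convention e_m = -infinity, the index h = min{i. e_i < a_i} is the least
  0-based index i < m such that either i = m-1 (the position of e_m = -infinity) or
  e ! i < a ! i.\<close>
definition gm_h :: "nat list \<Rightarrow> nat list \<Rightarrow> nat" where
  "gm_h a e = (LEAST i. i < length a \<and> (i = length e \<or> e ! i < a ! i))"

definition gen_maj1 :: "nat list \<Rightarrow> nat list \<Rightarrow> bool" where
  "gen_maj1 a e \<longleftrightarrow> length a = length e + 1 \<and>
     (\<forall>i. gm_h a e \<le> i \<and> i < length e \<longrightarrow> e ! i = a ! (i + 1))"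

end

theory Submission
  imports Defs
begin

theorem lemma5p5:
  fixes a e :: "nat list"
  assumes "is_partition a" and "is_partition e"
    and "length a = length e + 1"
    and "gen_maj1 a e"
    and "sum_list e \<le> sum_list a"
  shows "card {i. i < length a \<and> a ! i > 0} \<ge> card {i. i < length e \<and> e ! i > 0}"
proof -
  define n where "n = length e"
  have la: "length a = Suc n" using assms(3) n_def by simp
  have sa: "a ! j \<le> a ! i" if "i \<le> j" "j < Suc n" for i j
    using that assms(1) la sorted_wrt_nth_less[of "(\<ge>)" a i j] unfolding is_partition_def
    by (cases "i = j") auto
  have se: "e ! j \<le> e ! i" if "i \<le> j" "j < n" for i j
    using that assms(2) n_def sorted_wrt_nth_less[of "(\<ge>)" e i j] unfolding is_partition_def
    by (cases "i = j") auto
  define A where "A = {i. i < length a \<and> a ! i > 0}"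
  define E where "E = {i. i < length e \<and> e ! i > 0}"
  have cE: "card E \<le> n" proof -
    have "E \<subseteq> {..<n}" unfolding E_def n_def by auto
    then show ?thesis using card_mono[OF finite_lessThan, of E n] by simp
  qed
  show ?thesis
  proof (cases "\<forall>i<Suc n. a ! i > 0")
    case True
    then have "A = {..<Suc n}" unfolding A_def using la by auto
    then show ?thesis using cE unfolding A_def[symmetric] E_def[symmetric] by simp
  next
    case False
    define k where "k = (LEAST i. i < Suc n \<and> a ! i = 0)"
    have ex: "\<exists>i. i < Suc n \<and> a ! i = 0" using False by auto
    have k1: "k < Suc n" "a ! k = 0" using LeastI_ex[OF ex] unfolding k_def by auto
    have k2: "a ! i > 0" if "i < k" for i
      using that not_less_Least[of i "\<lambda>i. i < Suc n \<and> a ! i = 0"] k1(1) unfolding k_def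
      by auto
    have az: "a ! j = 0" if "k \<le> j" "j < Suc n" for j using that sa[of k] k1 by fastforce
    have Aeq: "A = {..<k}"
    proof
      show "A \<subseteq> {..<k}"
      proof
        fix x assume "x \<in> A"
        then have "x < Suc n" "a ! x > 0" unfolding A_def using la by auto
        then show "x \<in> {..<k}" using az[of x] by (cases "k \<le> x") auto
      qed
      show "{..<k} \<subseteq> A" unfolding A_def using la k1 k2 by auto
    qed
    show ?thesis
    proof (rule ccontr)
      assume "\<not> ?thesis"
      then have lt: "k < card E" using Aeq unfolding A_def[symmetric] E_def[symmetric] by simp
      have "\<exists>i\<in>E. k \<le> i"
      proof (rule ccontr)
        assume "\<not> ?thesis"
        then have "E \<subseteq> {..<k}" by auto
        then have "card E \<le> k" using card_mono[OF finite_lessThan, of E k] by simp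
        then show False using lt by simp
      qed
      then obtain i where i: "i \<in> E" "k \<le> i" by blast
      have ekpos: "e ! k > 0" "k < n" using i se[of k i] unfolding E_def n_def by auto
      define h where "h = gm_h a e"
      have hle: "h \<le> n" unfolding h_def gm_h_def n_def
        by (rule Least_le) (simp add: la n_def)
      have below: "\<And>j. j < h \<Longrightarrow> j < n \<Longrightarrow> a ! j \<le> e ! j"
      proof -
        fix j assume "j < h" "j < n"
        then have "\<not> (j < length a \<and> (j = length e \<or> e ! j < a ! j))"
          using not_less_Least[of j] \<open>j < h\<close> unfolding h_def gm_h_def by blast
        then show "a ! j \<le> e ! j" using \<open>j < n\<close> la n_def by auto
      qed
      have kh: "k < h"
      proof (rule ccontr)
        assume "\<not> k < h"
        then have "e ! k = a ! (k+1)" using assms(4) ekpos(2) unfolding gen_maj1_def h_def n_def by auto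
        then show False using az[of "k+1"] ekpos k1 by simp
      qed
      have "sum_list a = (\<Sum>j<Suc n. a ! j)" using la by (simp add: sum_list_sum_nth lessThan_atLeast0)
      also have "\<dots> = (\<Sum>j<k. a ! j) + (\<Sum>j\<in>{k..<Suc n}. a ! j)"
        using sum.atLeastLessThan_concat[of 0 k "Suc n" "\<lambda>j. a ! j"] k1 by (simp add: lessThan_atLeast0)
      also have "(\<Sum>j\<in>{k..<Suc n}. a ! j) = 0" using az by simp
      also have "(\<Sum>j<k. a ! j) \<le> (\<Sum>j<k. e ! j)"
        by (rule sum_mono) (use below kh ekpos in auto)
      also have "(\<Sum>j<k. e ! j) + 0 < (\<Sum>j<Suc k. e ! j)" using ekpos by simp
      also have "(\<Sum>j<Suc k. e ! j) \<le> (\<Sum>j<n. e ! j)"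
        by (rule sum_mono2) (use ekpos in auto)
      also have "\<dots> = sum_list e" by (simp add: sum_list_sum_nth lessThan_atLeast0 n_def)
      finally show False using assms(5) by simp
    qed
  qed
qed

end
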